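(* Let $n$ be odd, $k$ a positive integer with $\gcd(k,n)=1$, and $q=2^k$. For every $c\in\mathbb{F}_{2^n}$, the system $$\operatorname{Tr}\!\left(\frac{1}{v^{1/(q-1)}}\right)=1,\qquad (v+1)^{q+1}+cv=0$$ has at most one solution $v\in\mathbb{F}_{2^n}$.
   Context: $\operatorname{Tr}(x)=x+x^2+\cdots+x^{2^{n-1}}$ is the absolute trace from $\mathbb{F}_{2^n}$ to $\mathbb{F}_2$. Since $\gcd(q-1,2^n-1)=1$, the map $w\mapsto w^{q-1}$ is a bijection of $\mathbb{F}_{2^n}$, and $v^{1/(q-1)}$ denotes the unique $w\in\mathbb{F}_{2^n}$ with $w^{q-1}=v$. (A solution necessarily has $v\neq 0$, since $v=0$ does not satisfy the second equation.) *)

theory Defs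
  imports Main
begin

text \<open>Absolute trace from GF(2^n) to GF(2), valued in the field itself
  (its values are 0 or 1).\<close>
definition abs_trace :: "nat \<Rightarrow> 'a::field \<Rightarrow> 'a" where
  "abs_trace n x = (\<Sum>i<n. x ^ (2 ^ i))"

text \<open>v^(1/(q-1)) with q = 2^k: the unique w with w^(q-1) = v
  (unique since w |-> w^(q-1) is a bijection under the standing assumptions).\<close>
definition root_qm1 :: "nat \<Rightarrow> 'a::field \<Rightarrow> 'a" where
  "root_qm1 k v = (THE w. w ^ (2 ^ k - 1) = v)"

end

theory Submission
  imports Defs
begin

lemma key_alg:
  fixes v1 v2 c a1 a2 B :: "'a::comm_ring_1"
  assumes "1+1=(0::'a)" "a1*(v1+1) + c*v1 = 0" "a2*(v2+1)+c*v2=0" "B = a1+a2"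
  shows "a2*(v1+v2) + v1*(v2+1)*B = (v1+v2)*B"
proof -
  have "a2*(v1+v2) + v1*(v2+1)*B - (v1+v2)*B
     = v2*(a1*(v1+1) + c*v1) + v1*(a2*(v2+1)+c*v2) - (1+1)*(v2*a1 + c*v1*v2)"
    unfolding assms(4) by (simp add: algebra_simps)
  also have "\<dots> = 0" using assms(1-3) by simp
  finally show ?thesis by simp
qed

lemma key_field:
  fixes x X a2 B A v1 v2 :: "'a::field"
  assumes "A\<noteq>0" "B\<noteq>0" "x = v1*X" "a2*A + v1*(v2+1)*B = A*B"
  shows "X*a2/B + x*(v2+1)/A = X"
proof -
  have "X*a2/B + x*(v2+1)/A = X*(a2*A + v1*(v2+1)*B)/(A*B)"
    using assms(1,2) by (simp add: assms(3) field_simps)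
  also have "\<dots> = X" using assms by simp
  finally show ?thesis .
qed

lemma pow_card_same:
  fixes x :: "'a :: {field,finite}"
  shows "x ^ card (UNIV :: 'a set) = x"
proof (cases "x = 0")
  case False
  have "x * (\<Prod>y\<in>UNIV-{0}. x * y) = x * x ^ (card (UNIV :: 'a set) - 1) * \<Prod>(UNIV-{0})"
    by (simp add: prod.distrib mult_ac)
  also have "x * x ^ (card (UNIV :: 'a set) - 1) = x ^ Suc (card (UNIV :: 'a set) - 1)"
    by (subst power_Suc) auto
  also have "Suc (card (UNIV :: 'a set) - 1) = card (UNIV :: 'a set)"
    using finite_UNIV_card_ge_0[where ?'a = 'a] by simp
  also have "(\<Prod>y\<in>UNIV-{0}. x * y) = (\<Prod>y\<in>UNIV-{0}. y)"
    by (rule prod.reindex_bij_witness[of _ "\<lambda>y. y / x" "\<lambda>y. x * y"]) (use False in auto)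
  finally show ?thesis
    by simp
qed (use finite_UNIV_card_ge_0[where ?'a = 'a] in auto)

lemma char2:
  assumes "card (UNIV :: 'a::{field,finite} set) = 2 ^ n" "n > 0"
  shows "(1::'a) + 1 = 0"
proof -
  have "(-1::'a) ^ (2^n) = -1" using pow_card_same[of "-1::'a"] assms(1) by simp
  moreover have "even ((2::nat)^n)" using assms(2) by simp
  ultimately have "(1::'a) = -1" by simp
  from arg_cong[OF this, of "\<lambda>t. t+1"] show ?thesis by simp
qed

lemma char2_add_self:
  assumes "(1::'a::comm_ring_1) + 1 = 0"
  shows "(y::'a) + y = 0"
proof -
  have "y + y = y * (1+1)" by (simp add: algebra_simps)
  then show ?thesis using assms by simp
qed

lemma frob:
  assumes "(1::'a::comm_ring_1) + 1 = 0"
  shows "((a::'a) + b) ^ (2^j) = a ^ (2^j) + b ^ (2^j)"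
proof (induction j)
  case 0 then show ?case by simp
next
  case (Suc j)
  have "(a+b)^(2^Suc j) = ((a+b)^(2^j))^2" by (simp add: power_mult[symmetric] mult.commute)
  also have "\<dots> = (a ^ (2^j) + b ^ (2^j))^2" using Suc by simp
  also have "\<dots> = (a ^ (2^j))^2 + (b ^ (2^j))^2 + (a ^ (2^j) * b ^ (2^j) + a ^ (2^j) * b ^ (2^j))"
    by (simp add: power2_eq_square algebra_simps)
  also have "\<dots> = (a ^ (2^j))^2 + (b ^ (2^j))^2" using char2_add_self[OF assms] by simp
  also have "\<dots> = a^(2^Suc j) + b^(2^Suc j)" by (simp add: power_mult[symmetric] mult.commute)
  finally show ?case .
qed

lemma trace_add:
  assumes "(1::'a::field) + 1 = 0"
  shows "abs_trace n ((a::'a) + b) = abs_trace n a + abs_trace n b"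
  unfolding abs_trace_def using frob[OF assms] by (simp add: sum.distrib)

lemma trace_sq:
  fixes x :: "'a::field"
  assumes "x ^ (2^n) = x"
  shows "abs_trace n (x^2) = abs_trace n x"
proof -
  have "abs_trace n (x^2) = (\<Sum>i<n. x ^ (2 ^ Suc i))"
    unfolding abs_trace_def by (simp add: power_mult[symmetric] mult.commute)
  also have "\<dots> + x ^ (2^0) = (\<Sum>i<Suc n. x ^ (2 ^ i))"
    by (simp only: sum.lessThan_Suc_shift add.commute)
  also have "\<dots> = abs_trace n x + x ^ (2^n)"
    unfolding abs_trace_def by simp
  finally show ?thesis using assms by simp
qed

lemma trace_frob:
  fixes x :: "'a::field"
  assumes "\<And>y::'a. y ^ (2^n) = y"
  shows "abs_trace n (x^(2^j)) = abs_trace n x"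
proof (induction j)
  case 0 then show ?case by simp
next
  case (Suc j)
  have "x^(2^Suc j) = (x^(2^j))^2" by (simp add: power_mult[symmetric] mult.commute)
  then show ?case using trace_sq[OF assms] Suc by simp
qed

lemma pow_iter:
  fixes r :: "'a::comm_ring_1"
  assumes "r ^ (2^k) = r"
  shows "r ^ (2^(k*a)) = r"
proof (induction a)
  case 0 then show ?case by simp
next
  case (Suc a)
  have "r ^ (2^(k*Suc a)) = (r ^ (2^(k*a))) ^ (2^k)"
    by (simp add: power_add power_mult[symmetric] mult.commute)
  then show ?case using Suc assms by simp
qed

lemma root_inj:
  fixes w1 w2 :: "'a::{field,finite}"
  assumes "card (UNIV :: 'a set) = 2 ^ n" "k > 0" "coprime k n"
    and "w1 ^ (2^k - 1) = w2 ^ (2^k - 1)"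
  shows "w1 = w2"
proof -
  have "(2::nat)^1 \<le> 2^k" using assms(2) by (intro power_increasing) auto
  then have "(1::nat) < 2^k" by simp
  then have Qpos: "2^k - 1 > (0::nat)" by simp
  show ?thesis
  proof (cases "w2 = 0")
    case True
    then have "w1 ^ (2^k - 1) = 0" using assms(4) Qpos by simp
    then show ?thesis using True by simp
  next
    case False
    have w1nz: "w1 \<noteq> 0"
    proof
      assume "w1 = 0"
      then have "w1 ^ (2^k - 1) = 0" using zero_power[OF Qpos] by (simp only:)
      then have "w2 ^ (2^k - 1) = 0" by (simp only: assms(4))
      then show False using False by simp
    qed
    define r where "r = w1 / w2"
    have "r ^ (2^k - 1) = 1" unfolding r_def using assms(4) False by (simp add: power_divide)
    then have "r ^ (2^k - 1) * r = r" by simp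
    obtain m where m: "(2::nat)^k = Suc m" using Qpos by (cases "(2::nat)^k") auto
    then have "2^k - 1 = m" by simp
    with \<open>r ^ (2^k - 1) * r = r\<close> have rk: "r ^ (2^k) = r" by (simp add: m power_Suc2)
    have rn: "r ^ (2^n) = r" using pow_card_same[of r] assms(1) by simp
    have "gcd k n = 1" using assms(3) by simp
    then obtain a b where ab: "k * a = n * b + 1"
      using bezout_nat[of k n] assms(2) by auto
    have "r = r ^ (2^(k*a))" using pow_iter[OF rk] by simp
    also have "\<dots> = (r ^ (2^(n*b)))^2"
    proof -
      have "(2::nat)^(k*a) = 2^(n*b)*2" by (simp add: ab)
      then show ?thesis by (simp only: power_mult)
    qed
    also have "\<dots> = r^2" using pow_iter[OF rn] by simp
    finally have "r = r^2" .
    moreover have "r \<noteq> 0" unfolding r_def using w1nz False by simp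
    ultimately have "r = 1" by (simp add: power2_eq_square)
    then show ?thesis unfolding r_def using False by simp
  qed
qed

lemma root_spec:
  fixes v :: "'a::{field,finite}"
  assumes "card (UNIV :: 'a set) = 2 ^ n" "k > 0" "coprime k n"
  shows "(root_qm1 k v) ^ (2^k - 1) = v"
proof -
  have inj: "inj (\<lambda>w::'a. w ^ (2^k - 1))"
    using root_inj[OF assms] by (auto intro: injI)
  have "surj (\<lambda>w::'a. w ^ (2^k - 1))" by (rule finite_UNIV_inj_surj[OF _ inj]) simp
  then obtain w where wv: "w ^ (2^k - 1) = v" by (metis surjD)
  have "\<exists>!w::'a. w ^ (2^k - 1) = v"
  proof (rule ex1I[of _ w])
    show "w ^ (2^k - 1) = v" by (rule wv)
  next
    fix y :: 'a assume yv: "y ^ (2^k - 1) = v"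
    have "y ^ (2^k - 1) = w ^ (2^k - 1)" using yv wv by simp
    then show "y = w" by (rule root_inj[OF assms])
  qed
  then show ?thesis unfolding root_qm1_def by (rule theI')
qed

theorem mainTheorem2:
  fixes n k :: nat and c :: "'a::{field,finite}"
  assumes "card (UNIV :: 'a set) = 2 ^ n"
    and "odd n"
    and "k > 0"
    and "coprime k n"
  shows "card {v :: 'a. abs_trace n (1 / root_qm1 k v) = 1
                 \<and> (v + 1) ^ (2 ^ k + 1) + c * v = 0} \<le> 1"
proof -
  let ?S = "{v :: 'a. abs_trace n (1 / root_qm1 k v) = 1
                 \<and> (v + 1) ^ (2 ^ k + 1) + c * v = 0}"
  define Q :: nat where "Q = 2^k"
  have npos: "n > 0" using assms(2) by (cases n) auto
  have ch: "(1::'a) + 1 = 0" using char2[OF assms(1) npos] .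
  have "(2::nat)^1 \<le> 2^k" using assms(3) by (intro power_increasing) auto
  then have Qge: "Q \<ge> 2" unfolding Q_def by simp
  have fN: "\<And>y::'a. y ^ (2^n) = y" using pow_card_same assms(1) by metis
  have "\<forall>v1\<in>?S. \<forall>v2\<in>?S. v1 = v2"
  proof (intro ballI, rule ccontr)
    fix v1 v2 assume v1S: "v1 \<in> ?S" and v2S: "v2 \<in> ?S" and ne: "v1 \<noteq> v2"
    define w where "w = root_qm1 k v1"
    have wv: "w ^ (Q - 1) = v1" unfolding w_def Q_def using root_spec[OF assms(1,3,4)] .
    have tr1: "abs_trace n (1 / w) = 1" using v1S unfolding w_def by simp
    have e1: "(v1 + 1) ^ (Q + 1) + c * v1 = 0" using v1S unfolding Q_def by simp
    have e2: "(v2 + 1) ^ (Q + 1) + c * v2 = 0" using v2S unfolding Q_def by simp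
    have v1nz: "v1 \<noteq> 0" using e1 by auto
    have wnz: "w \<noteq> 0"
    proof
      assume "w = 0"
      then have "v1 = 0" using wv[symmetric] Qge by simp
      then show False using v1nz by simp
    qed
    define x where "x = 1 / w"
    define A where "A = v1 + v2"
    have Anz: "A \<noteq> 0"
    proof
      assume "A = 0"
      then have "v1 + v2 + v2 = v2" unfolding A_def by simp
      then show False using ne char2_add_self[OF ch, of v2] by (simp add: add.assoc)
    qed
    define B where "B = A ^ Q"
    have Bnz: "B \<noteq> 0" unfolding B_def using Anz by simp
    define a1 where "a1 = (v1+1)^Q"
    define a2 where "a2 = (v2+1)^Q"
    have fr: "\<And>a b::'a. (a + b)^Q = a^Q + b^Q" unfolding Q_def using frob[OF ch] by blast
    have Bsum: "B = a1 + a2"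
    proof -
      have "a1 + a2 = v1^Q + v2^Q + (1 + 1)" unfolding a1_def a2_def fr by (simp add: algebra_simps)
      then show ?thesis unfolding B_def A_def fr using ch by simp
    qed
    have h1: "a1*(v1+1) + c*v1 = 0" using e1 unfolding a1_def by (simp add: power_add mult.commute)
    have h2: "a2*(v2+1) + c*v2 = 0" using e2 unfolding a2_def by (simp add: power_add mult.commute)
    have br: "a2*A + v1*(v2+1)*B = A*B"
      using key_alg[OF ch h1 h2 Bsum] unfolding A_def by (simp add: algebra_simps)
    have xrel: "x = v1 * x^Q"
    proof -
      obtain m where m: "Q = Suc m" using Qge by (cases Q) auto
      have "w ^ Q = w ^ (Q - 1) * w" by (simp add: m power_Suc2)
      then have "v1 * x^Q = w^(Q-1) / w^Q" unfolding x_def wv[symmetric] by (simp add: power_divide)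
      also have "\<dots> = x" unfolding x_def using wnz \<open>w ^ Q = w ^ (Q - 1) * w\<close> by simp
      finally show ?thesis by simp
    qed
    define s where "s = x*(v2+1)/A"
    have sQ: "s^Q = x^Q * a2 / B"
      unfolding s_def a2_def B_def by (simp add: power_divide power_mult_distrib)
    have "s^Q + s = x^Q*a2/B + s" by (simp only: sQ)
    also have "\<dots> = x^Q" unfolding s_def by (rule key_field[OF Anz Bnz xrel br])
    finally have eq: "s^Q + s = x^Q" .
    have "abs_trace n (x^Q) = abs_trace n (s^Q + s)" by (simp only: eq)
    also have "\<dots> = abs_trace n (s^Q) + abs_trace n s" by (rule trace_add[OF ch])
    also have "\<dots> = 0" unfolding Q_def using trace_frob[OF fN] char2_add_self[OF ch] by simp
    finally have "abs_trace n x = 0" unfolding Q_def using trace_frob[OF fN] by simp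
    then have "(1::'a) = 0" using tr1 unfolding x_def by (simp only:)
    then show False by (rule one_neq_zero[THEN notE])
  qed
  moreover have "finite ?S" by simp
  ultimately have "card ?S \<le> Suc 0" using card_le_Suc0_iff_eq[of ?S] by blast
  then show ?thesis by (simp only: One_nat_def)
qed

end
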